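(* Let $r,m\in\mathbb{N}$, let $E\subset\mathbb{R}^r$ be a compact domain and let $f:E\to\mathbb{R}^m$ be a solvable function. Then there exists a countable ordinal $\alpha<\omega_1$ such that $E_\alpha=\emptyset$, where $\{E_\gamma\}_\gamma$ is the sequence of $f$-removed sets on $E$.
   Context: A compact domain is a nonempty connected compact subset of $\mathbb{R}^r$; $\omega_1$ is the first uncountable ordinal. For $S\subseteq\mathbb{R}^r$ and $g:S\to\mathbb{R}^m$, $D_g$ is the set of points of $S$ at which $g$ is discontinuous with respect to the subspace topology of $S$. The sequence of $f$-removed sets on $E$: $E_0=E$; $E_{\alpha+1}=D_{f\restriction_{E_\alpha}}$; $E_\lambda=\bigcap_{\beta<\lambda}E_\beta$ for limit $\lambda$. A function $f:E\to\mathbb{R}^m$ is solvable if it is of class Baire one (a pointwise limit on $E$ of a sequence of continuous functions $E\to\mathbb{R}^m$) and for every closed set $K\subseteq E$ the set $D_{f\restriction_K}$ is closed. *)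

theory Defs
  imports "HOL-Analysis.Analysis"
begin

definition discont_set :: "('a::metric_space \<Rightarrow> 'b::metric_space) \<Rightarrow> 'a set \<Rightarrow> 'a set" where
  "discont_set g S = {x \<in> S. \<not> continuous (at x within S) g}"

definition compact_domain :: "'a::euclidean_space set \<Rightarrow> bool" where
  "compact_domain E \<longleftrightarrow> E \<noteq> {} \<and> connected E \<and> compact E"

definition baire_one_on :: "'a::euclidean_space set \<Rightarrow> ('a \<Rightarrow> 'b::euclidean_space) \<Rightarrow> bool" where
  "baire_one_on E f \<longleftrightarrow>
     (\<exists>g :: nat \<Rightarrow> 'a \<Rightarrow> 'b. (\<forall>n. continuous_on E (g n)) \<and>
        (\<forall>x\<in>E. (\<lambda>n. g n x) \<longlonglongrightarrow> f x))"

definition solvable :: "'a::euclidean_space set \<Rightarrow> ('a \<Rightarrow> 'b::euclidean_space) \<Rightarrow> bool" where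
  "solvable E f \<longleftrightarrow> baire_one_on E f \<and>
     (\<forall>K. closed K \<and> K \<subseteq> E \<longrightarrow> closed (discont_set f K))"

text \<open>Ordinals are represented by elements of a well-order r (reflexive, as in Main);
  the ordinal of an element a is the order type of its strict initial segment.
  S is the sequence of f-removed sets on E indexed along r:
  S at the minimum is E, at a successor of b it is D of f restricted to S b, and
  at a limit it is the intersection of all earlier stages.\<close>
definition is_imm_pred :: "'i rel \<Rightarrow> 'i \<Rightarrow> 'i \<Rightarrow> bool" where
  "is_imm_pred r b a \<longleftrightarrow> (b, a) \<in> r \<and> b \<noteq> a \<and>
     (\<forall>c. (c, a) \<in> r \<and> c \<noteq> a \<longrightarrow> (c, b) \<in> r)"

definition removed_seq ::
  "('a::euclidean_space \<Rightarrow> 'b::euclidean_space) \<Rightarrow> 'a set \<Rightarrow> 'i rel \<Rightarrow> ('i \<Rightarrow> 'a set) \<Rightarrow> bool" where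
  "removed_seq f E r S \<longleftrightarrow>
     (\<forall>a\<in>Field r.
        ((\<forall>b. (b, a) \<in> r \<longrightarrow> b = a) \<longrightarrow> S a = E) \<and>
        (\<forall>b. is_imm_pred r b a \<longrightarrow> S a = discont_set f (S b)) \<and>
        ((\<exists>b. (b, a) \<in> r \<and> b \<noteq> a) \<and> \<not> (\<exists>b. is_imm_pred r b a) \<longrightarrow>
            S a = (\<Inter>{S b | b. (b, a) \<in> r \<and> b \<noteq> a})))"

end

theory Submission
  imports Defs
begin


lemma baire_closed_union:
  fixes S :: "'a::euclidean_space set"
  assumes S: "closed S" "S \<noteq> {}" and F: "\<And>N::nat. closed (F N)" and cov: "S \<subseteq> (\<Union>N. F N)"
  shows "\<exists>N y W. y \<in> S \<and> open W \<and> y \<in> W \<and> W \<inter> S \<subseteq> F N"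
proof (rule ccontr)
  assume H: "\<not> ?thesis"
  have c: "S \<subseteq> closure (\<Inter>(range (\<lambda>N. S - F N)))"
  proof (rule Baire[OF S(1)])
    show "countable (range (\<lambda>N. S - F N))" by simp
    fix T assume "T \<in> range (\<lambda>N. S - F N)"
    then obtain N where T: "T = S - F N" by auto
    have "openin (top_of_set S) T" unfolding T using F
      by (simp add: Diff_eq openin_open_Int open_Compl)
    moreover have "S \<subseteq> closure T"
    proof
      fix y assume y: "y \<in> S"
      show "y \<in> closure T"
      proof (rule ccontr)
        assume "y \<notin> closure T"
        then obtain W where W: "open W" "y \<in> W" "T \<inter> W = {}"
          unfolding closure_iff_nhds_not_empty by blast
        then have "W \<inter> S \<subseteq> F N" using T by blast
        then show False using H y W by blast
      qed
    qed
    ultimately show "openin (top_of_set S) T \<and> S \<subseteq> closure T" by blast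
  qed
  have e: "\<Inter>(range (\<lambda>N. S - F N)) = {}" using cov by blast
  from c show False unfolding e using S(2) by simp
qed

lemma baire_step:
  fixes K :: "'a::euclidean_space set" and f :: "'a \<Rightarrow> 'b::euclidean_space"
  assumes K: "closed K" and cg: "\<And>n. continuous_on K (g n)"
    and lim: "\<And>x. x\<in>K \<Longrightarrow> (\<lambda>n. g n x) \<longlonglongrightarrow> f x"
    and x0: "x0 \<in> K" and d: "\<delta>>0" and e: "\<epsilon>>0"
  shows "\<exists>y\<in>K. dist y x0 < \<delta> \<and> (\<exists>\<eta>>0. \<forall>z\<in>K. \<forall>w\<in>K. dist z y < \<eta> \<longrightarrow> dist w y < \<eta> \<longrightarrow> dist (f z) (f w) \<le> \<epsilon>)"
proof -
  define S where "S = closure (K \<inter> ball x0 \<delta>)"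
  have SK: "S \<subseteq> K" unfolding S_def using K by (simp add: closure_minimal)
  have Sne: "S \<noteq> {}" unfolding S_def using x0 d by (auto intro!: closure_subset[THEN subsetD])
  define F where "F N = {x\<in>S. \<forall>n\<ge>N. \<forall>m\<ge>N. dist (g n x) (g m x) \<le> \<epsilon>/3}" for N
  have clS: "closed S" unfolding S_def by simp
  have "closed (F N)" for N
  proof -
    have "F N = S \<inter> (\<Inter>n\<in>{N..}. \<Inter>m\<in>{N..}. {x\<in>S. dist (g n x) (g m x) \<le> \<epsilon>/3})"
      unfolding F_def by auto
    moreover have "closed {x\<in>S. dist (g n x) (g m x) \<le> \<epsilon>/3}" for n m
      using continuous_on_closed_Collect_le[of S "\<lambda>x. dist (g n x) (g m x)" "\<lambda>x. \<epsilon>/3"] clS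
        continuous_on_subset[OF cg SK]
      by (auto intro!: continuous_intros)
    ultimately show ?thesis using clS by (simp only:) (intro closed_Int closed_INT ballI, auto)
  qed
  moreover have "S \<subseteq> (\<Union>N. F N)"
  proof
    fix x assume x: "x \<in> S"
    have "Cauchy (\<lambda>n. g n x)" using lim x SK LIMSEQ_imp_Cauchy by blast
    then obtain N where "\<forall>m\<ge>N. \<forall>n\<ge>N. dist (g m x) (g n x) < \<epsilon>/3"
      using metric_CauchyD[of "\<lambda>n. g n x" "\<epsilon>/3"] e by auto
    then have "x \<in> F N" unfolding F_def using x by (auto intro: less_imp_le)
    then show "x \<in> (\<Union>N. F N)" by blast
  qed
  ultimately obtain N y W where y: "y \<in> S" "open W" "y \<in> W" "W \<inter> S \<subseteq> F N"
    using baire_closed_union[OF clS Sne] by blast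
  have "(K \<inter> ball x0 \<delta>) \<inter> W \<noteq> {}"
    using y unfolding S_def closure_iff_nhds_not_empty by blast
  then obtain y' where y': "y' \<in> K" "dist y' x0 < \<delta>" "y' \<in> W"
    by (auto simp: dist_commute)
  have "y' \<in> W \<inter> ball x0 \<delta>" using y' by (simp add: dist_commute)
  then obtain \<eta>1 where h1: "\<eta>1 > 0" "ball y' \<eta>1 \<subseteq> W \<inter> ball x0 \<delta>"
    using openE[of "W \<inter> ball x0 \<delta>"] y(2) by blast
  obtain \<eta>2 where h2: "\<eta>2 > 0" "\<forall>z\<in>K. dist z y' < \<eta>2 \<longrightarrow> dist (g N z) (g N y') < \<epsilon>/6"
    using cg[of N, unfolded continuous_on_iff, rule_format, OF y'(1), of "\<epsilon>/6"] e by auto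
  have fz: "dist (f z) (g N z) \<le> \<epsilon>/3" if z: "z \<in> K" "dist z y' < \<eta>1" for z
  proof -
    have "z \<in> W \<inter> S" using h1 z unfolding S_def
      by (auto simp: dist_commute intro!: closure_subset[THEN subsetD])
    then have zF: "z \<in> F N" using y(4) by blast
    have "(\<lambda>n. dist (g n z) (g N z)) \<longlonglongrightarrow> dist (f z) (g N z)"
      by (intro tendsto_intros lim z)
    moreover have "\<forall>n\<ge>N. dist (g n z) (g N z) \<le> \<epsilon>/3" using zF unfolding F_def by auto
    ultimately show ?thesis using LIMSEQ_le_const2 by blast
  qed
  show ?thesis
  proof (intro bexI[OF _ y'(1)] conjI y'(2) exI[of _ "min \<eta>1 \<eta>2"] ballI impI)
    show "min \<eta>1 \<eta>2 > 0" using h1 h2 by simp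
    fix z w assume z: "z \<in> K" "w \<in> K" "dist z y' < min \<eta>1 \<eta>2" "dist w y' < min \<eta>1 \<eta>2"
    have a: "dist (f z) (g N z) \<le> \<epsilon>/3" "dist (f w) (g N w) \<le> \<epsilon>/3" using fz z by auto
    have b: "dist (g N z) (g N y') < \<epsilon>/6" "dist (g N w) (g N y') < \<epsilon>/6" using h2 z by auto
    have t1: "dist (f z) (f w) \<le> dist (f z) (g N z) + dist (g N z) (f w)" by (rule dist_triangle)
    have t2: "dist (g N z) (f w) \<le> dist (g N z) (g N y') + dist (g N y') (f w)" by (rule dist_triangle)
    have t3: "dist (g N y') (f w) \<le> dist (g N y') (g N w) + dist (g N w) (f w)" by (rule dist_triangle)
    have "dist (f z) (f w) \<le> dist (f z) (g N z) + dist (g N z) (g N y') + dist (g N w) (g N y') + dist (f w) (g N w)"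
      using t1 t2 t3 by (simp add: dist_commute)
    then show "dist (f z) (f w) \<le> \<epsilon>" using a b by linarith
  qed
qed


lemma baire_one_cont_point:
  fixes K :: "'a::euclidean_space set" and f :: "'a \<Rightarrow> 'b::euclidean_space"
  assumes K: "closed K" "K \<noteq> {}" and cg: "\<And>n. continuous_on K (g n)"
    and lim: "\<And>x. x\<in>K \<Longrightarrow> (\<lambda>n. g n x) \<longlonglongrightarrow> f x"
  shows "\<exists>x\<in>K. continuous (at x within K) f"
proof -
  define G where "G k = {x\<in>K. \<exists>\<eta>>0. \<forall>z\<in>K. \<forall>w\<in>K. dist z x < \<eta> \<longrightarrow> dist w x < \<eta> \<longrightarrow> dist (f z) (f w) \<le> 1/Suc k}" for k
  have c: "K \<subseteq> closure (\<Inter>(range G))"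
  proof (rule Baire[OF K(1)])
    show "countable (range G)" by simp
    fix T assume "T \<in> range G"
    then obtain k where T: "T = G k" by auto
    have "openin (top_of_set K) (G k)"
      unfolding openin_euclidean_subtopology_iff
    proof (intro conjI ballI)
      show "G k \<subseteq> K" unfolding G_def by auto
      fix x assume "x \<in> G k"
      then obtain \<eta> where x: "x \<in> K" "\<eta> > 0" and h: "\<forall>z\<in>K. \<forall>w\<in>K. dist z x < \<eta> \<longrightarrow> dist w x < \<eta> \<longrightarrow> dist (f z) (f w) \<le> 1/Suc k"
        unfolding G_def by auto
      show "\<exists>e>0. \<forall>x'\<in>K. dist x' x < e \<longrightarrow> x' \<in> G k"
      proof (intro exI[of _ "\<eta>/2"] conjI ballI impI)
        show "\<eta>/2 > 0" using x by simp
        fix x' assume x': "x' \<in> K" "dist x' x < \<eta>/2"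
        have hh: "\<forall>z\<in>K. \<forall>w\<in>K. dist z x' < \<eta>/2 \<longrightarrow> dist w x' < \<eta>/2 \<longrightarrow> dist (f z) (f w) \<le> 1/Suc k"
        proof (intro ballI impI)
          fix z w assume zw: "z \<in> K" "w \<in> K" "dist z x' < \<eta>/2" "dist w x' < \<eta>/2"
          have "dist z x < \<eta>" using dist_triangle[of z x x'] zw x' by linarith
          moreover have "dist w x < \<eta>" using dist_triangle[of w x x'] zw x' by linarith
          ultimately show "dist (f z) (f w) \<le> 1/Suc k" using h zw by blast
        qed
        have "\<eta>/2 > 0" using x by simp
        with hh x'(1) show "x' \<in> G k" unfolding G_def by blast
      qed
    qed
    moreover have "K \<subseteq> closure (G k)"
    proof
      fix x0 assume x0: "x0 \<in> K"
      show "x0 \<in> closure (G k)" unfolding closure_approachable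
      proof (intro allI impI)
        fix e :: real assume e: "e > 0"
        obtain y where "y \<in> K" "dist y x0 < e"
          "\<exists>\<eta>>0. \<forall>z\<in>K. \<forall>w\<in>K. dist z y < \<eta> \<longrightarrow> dist w y < \<eta> \<longrightarrow> dist (f z) (f w) \<le> 1/Suc k"
          using baire_step[OF K(1) cg lim x0 e, of "1/Suc k"] by auto
        then show "\<exists>y\<in>G k. dist y x0 < e" unfolding G_def by blast
      qed
    qed
    ultimately show "openin (top_of_set K) T \<and> K \<subseteq> closure T" unfolding T by (rule conjI)
  qed
  have "\<Inter>(range G) \<noteq> {}"
  proof
    assume "\<Inter>(range G) = {}"
    with c have "K \<subseteq> {}" by simp
    with K(2) show False by simp
  qed
  then obtain x where x: "\<And>k. x \<in> G k" by auto
  then have xK: "x \<in> K" unfolding G_def by auto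
  have "continuous (at x within K) f" unfolding continuous_within_eps_delta
  proof (intro allI impI)
    fix e :: real assume e: "e > 0"
    obtain k where "inverse (real (Suc k)) < e" using reals_Archimedean[OF e] by blast
    then have k: "1 / Suc k < e" by (simp add: inverse_eq_divide)
    obtain \<eta> where "\<eta> > 0" and h: "\<forall>z\<in>K. \<forall>w\<in>K. dist z x < \<eta> \<longrightarrow> dist w x < \<eta> \<longrightarrow> dist (f z) (f w) \<le> 1/Suc k"
      using x[of k] unfolding G_def by auto
    have "\<forall>x'\<in>K. dist x' x < \<eta> \<longrightarrow> dist (f x') (f x) < e"
    proof (intro ballI impI)
      fix x' assume "x' \<in> K" "dist x' x < \<eta>"
      then have "dist (f x') (f x) \<le> 1/Suc k" using h xK \<open>\<eta> > 0\<close> by simp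
      then show "dist (f x') (f x) < e" using k by linarith
    qed
    then show "\<exists>d>0. \<forall>x'\<in>K. dist x' x < d \<longrightarrow> dist (f x') (f x) < e"
      using \<open>\<eta> > 0\<close> by blast
  qed
  then show ?thesis using xK by blast
qed



inductive_set tower :: "('a set \<Rightarrow> 'a set) \<Rightarrow> 'a set \<Rightarrow> 'a set set"
  for D :: "'a set \<Rightarrow> 'a set" and E :: "'a set" where
  tE: "E \<in> tower D E"
| tD: "X \<in> tower D E \<Longrightarrow> D X \<in> tower D E"
| tI: "X0 \<in> M \<Longrightarrow> (\<And>X. X \<in> M \<Longrightarrow> X \<in> tower D E) \<Longrightarrow> \<Inter>M \<in> tower D E"

lemma tower_sub:
  assumes dec: "\<And>X. D X \<subseteq> X"
  shows "X \<in> tower D E \<Longrightarrow> X \<subseteq> E"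
  by (induction rule: tower.induct) (use dec in blast)+

lemma tower_l1:
  assumes dec: "\<And>X. D X \<subseteq> X"
    and C: "C \<in> tower D E" and ext: "\<forall>X\<in>tower D E. C \<subset> X \<longrightarrow> C \<subseteq> D X"
  shows "X \<in> tower D E \<Longrightarrow> C \<subseteq> X \<or> X \<subseteq> D C"
proof (induction rule: tower.induct)
  case tE
  then show ?case using tower_sub[OF dec C] by blast
next
  case (tD Y)
  show ?case
  proof (cases "Y \<subseteq> D C")
    case True
    then show ?thesis using dec[of Y] by blast
  next
    case False
    then have "C \<subseteq> Y" using tD.IH by blast
    then show ?thesis
    proof (cases "C = Y")
      case True then show ?thesis by blast
    next
      case False
      then have "C \<subset> Y" using \<open>C \<subseteq> Y\<close> by blast
      then show ?thesis using ext tD.hyps by blast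
    qed
  qed
next
  case (tI X0 M)
  show ?case
  proof (cases "\<forall>Y\<in>M. C \<subseteq> Y")
    case True then show ?thesis by blast
  next
    case False
    then obtain Y where "Y \<in> M" "\<not> C \<subseteq> Y" by blast
    then have "Y \<subseteq> D C" using tI.IH by blast
    then show ?thesis using \<open>Y \<in> M\<close> by blast
  qed
qed

lemma tower_l2:
  assumes dec: "\<And>X. D X \<subseteq> X"
  shows "C \<in> tower D E \<Longrightarrow> \<forall>X\<in>tower D E. C \<subset> X \<longrightarrow> C \<subseteq> D X"
proof (induction rule: tower.induct)
  case tE
  then show ?case using tower_sub[OF dec] by blast
next
  case (tD Y)
  show ?case
  proof (intro ballI impI)
    fix X assume X: "X \<in> tower D E" "D Y \<subset> X"
    have "Y \<subseteq> X \<or> X \<subseteq> D Y" using tower_l1[OF dec tD.hyps tD.IH X(1)] .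
    then have "Y \<subseteq> X" using X(2) by blast
    show "D Y \<subseteq> D X"
    proof (cases "Y = X")
      case True then show ?thesis by simp
    next
      case False
      then have "Y \<subseteq> D X" using tD.IH X(1) \<open>Y \<subseteq> X\<close> by blast
      then show ?thesis using dec[of Y] by blast
    qed
  qed
next
  case (tI X0 M)
  show ?case
  proof (intro ballI impI)
    fix X assume X: "X \<in> tower D E" "\<Inter>M \<subset> X"
    show "\<Inter>M \<subseteq> D X"
    proof (cases "\<exists>Y\<in>M. Y \<subset> X")
      case True
      then obtain Y where Y: "Y \<in> M" "Y \<subset> X" by blast
      then have "Y \<subseteq> D X" using tI.IH X(1) by blast
      then show ?thesis using Y(1) by blast
    next
      case False
      have "X \<subseteq> Y" if Y: "Y \<in> M" for Y
      proof -
        have "Y \<subseteq> X \<or> X \<subseteq> D Y" using tower_l1[OF dec _ _ X(1), of Y] tI.IH tI.hyps Y by blast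
        then show ?thesis using False Y dec[of Y] by blast
      qed
      then have "X \<subseteq> \<Inter>M" by blast
      then show ?thesis using X(2) by blast
    qed
  qed
qed

lemma tower_cmp:
  assumes dec: "\<And>X. D X \<subseteq> X" and "C \<in> tower D E" "X \<in> tower D E"
  shows "C \<subseteq> X \<or> X \<subseteq> D C"
  using tower_l1[OF dec assms(2) tower_l2[OF dec assms(2)] assms(3)] .

lemma tower_chain:
  assumes dec: "\<And>X. D X \<subseteq> X" and "C \<in> tower D E" "X \<in> tower D E"
  shows "C \<subseteq> X \<or> X \<subseteq> C"
  using tower_cmp[OF assms] dec[of C] by blast



lemma discont_sub: "discont_set f X \<subseteq> X" unfolding discont_set_def by auto

theorem mainTheorem6:
  fixes E :: "'a::euclidean_space set" and f :: "'a \<Rightarrow> 'b::euclidean_space"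
  assumes "compact_domain E" and "solvable E f"
  shows "\<exists>(r :: nat rel) (S :: nat \<Rightarrow> 'a set) a.
           Well_order r \<and> a \<in> Field r \<and> removed_seq f E r S \<and> S a = {}"
proof -
  define D where "D = discont_set f"
  have dec: "\<And>X. D X \<subseteq> X" unfolding D_def by (rule discont_sub)
  have cE: "compact E" using assms(1) unfolding compact_domain_def by blast
  obtain g :: "nat \<Rightarrow> 'a \<Rightarrow> 'b" where cg: "\<And>n. continuous_on E (g n)"
    and lim: "\<And>x. x \<in> E \<Longrightarrow> (\<lambda>n. g n x) \<longlonglongrightarrow> f x"
    using assms(2) unfolding solvable_def baire_one_on_def by blast
  have solv: "\<And>K. closed K \<Longrightarrow> K \<subseteq> E \<Longrightarrow> closed (D K)"
    using assms(2) unfolding solvable_def D_def by blast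
  define T where "T = tower D E"
  have Tsub: "\<And>X. X \<in> T \<Longrightarrow> X \<subseteq> E" unfolding T_def using tower_sub[OF dec] by blast
  have Tcl: "closed X" if "X \<in> T" for X
    using that unfolding T_def
  proof (induction rule: tower.induct)
    case tE then show ?case using cE by (rule compact_imp_closed)
  next
    case (tD X) then show ?case using solv tower_sub[OF dec tD.hyps] by blast
  next
    case (tI X0 M) then show ?case by blast
  qed
  have Tne: "D X \<noteq> X" if X: "X \<in> T" "X \<noteq> {}" for X
  proof -
    have "\<exists>x\<in>X. continuous (at x within X) f"
      using baire_one_cont_point[OF Tcl[OF X(1)] X(2), of g f] continuous_on_subset[OF cg Tsub[OF X(1)]]
        lim Tsub[OF X(1)] by blast
    then show ?thesis unfolding D_def discont_set_def by blast
  qed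
  have TD: "D X \<in> T" if "X \<in> T" for X using that unfolding T_def by (rule tower.tD)
  have TE: "E \<in> T" unfolding T_def by (rule tower.tE)
  have TI: "\<Inter>M \<in> T" if "X0 \<in> M" "M \<subseteq> T" for X0 M
    using that unfolding T_def by (intro tower.tI) blast+
  have cmp: "\<And>C X. C \<in> T \<Longrightarrow> X \<in> T \<Longrightarrow> C \<subseteq> X \<or> X \<subseteq> D C"
    unfolding T_def using tower_cmp[OF dec] by blast
  have chain: "\<And>C X. C \<in> T \<Longrightarrow> X \<in> T \<Longrightarrow> C \<subseteq> X \<or> X \<subseteq> C"
    using cmp dec by blast
  have fix_empty: "X = {}" if "X \<in> T" "D X = X" for X using Tne that by blast
  have Te: "{} \<in> T"
  proof -
    have I: "\<Inter>T \<in> T" using TI[OF TE] by blast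
    then have "\<Inter>T \<subseteq> D (\<Inter>T)" using TD by blast
    then have "D (\<Inter>T) = \<Inter>T" using dec by blast
    then have "\<Inter>T = {}" using fix_empty I by blast
    then show ?thesis using I by simp
  qed
  have greatest: "\<exists>G\<in>M. \<forall>Y\<in>M. Y \<subseteq> G" if M: "M \<subseteq> T" "M \<noteq> {}" for M
  proof -
    define U where "U = {X\<in>T. \<forall>Y\<in>M. Y \<subseteq> X}"
    have "\<forall>Y\<in>M. Y \<subseteq> E" using Tsub M(1) by blast
    then have EU: "E \<in> U" unfolding U_def using TE by blast
    have "U \<subseteq> T" unfolding U_def by blast
    then have IT: "\<Inter>U \<in> T" using TI[OF EU] by blast
    have IM: "\<forall>Y\<in>M. Y \<subseteq> \<Inter>U" unfolding U_def by blast
    show ?thesis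
    proof (cases "\<Inter>U \<in> M")
      case True then show ?thesis using IM by blast
    next
      case False
      have "Y \<subseteq> D (\<Inter>U)" if Y: "Y \<in> M" for Y
      proof -
        have YT: "Y \<in> T" using Y M(1) by blast
        have ne: "Y \<noteq> \<Inter>U" using False Y by blast
        have "Y \<subseteq> \<Inter>U" using IM Y by blast
        then have "\<not> \<Inter>U \<subseteq> Y" using ne by blast
        then show ?thesis using cmp[OF IT YT] by blast
      qed
      then have "D (\<Inter>U) \<in> U" using TD[OF IT] unfolding U_def by blast
      then have "\<Inter>U \<subseteq> D (\<Inter>U)" by blast
      then have "D (\<Inter>U) = \<Inter>U" using dec[of "\<Inter>U"] by blast
      then have e: "\<Inter>U = {}" using fix_empty[OF IT] by blast
      obtain Y where Y: "Y \<in> M" using M(2) by blast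
      then have "Y = {}" using IM e by blast
      then show ?thesis using False e Y by simp
    qed
  qed
  have cT: "countable T"
  proof -
    obtain B :: "'a set set" where B: "countable B" "\<And>C. C\<in>B \<Longrightarrow> open C"
      "\<And>S. open S \<Longrightarrow> \<exists>U. U \<subseteq> B \<and> S = \<Union>U" using univ_second_countable[where 'a='a] by blast
    have ex: "\<exists>b. b\<in>B \<and> b \<inter> X \<noteq> {} \<and> b \<inter> D X = {}" if X: "X \<in> T - {{}}" for X
    proof -
      have X': "X \<in> T" "X \<noteq> {}" using X by auto
      obtain x where x: "x \<in> X" "x \<notin> D X" using Tne[OF X'] dec[of X] by blast
      have "open (- D X)" using Tcl[OF TD[OF X'(1)]] by (simp add: open_Compl)
      then obtain U where U: "U \<subseteq> B" "- D X = \<Union>U" using B(3) by blast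
      have "x \<in> \<Union>U" using x(2) U(2) by blast
      then obtain b where b: "b \<in> U" "x \<in> b" by blast
      have "b \<subseteq> - D X" using U(2) b(1) by blast
      then show ?thesis using x(1) b U(1) by blast
    qed
    define \<phi> where "\<phi> X = (SOME b. b\<in>B \<and> b \<inter> X \<noteq> {} \<and> b \<inter> D X = {})" for X
    have \<phi>: "\<phi> X \<in> B \<and> \<phi> X \<inter> X \<noteq> {} \<and> \<phi> X \<inter> D X = {}" if "X \<in> T - {{}}" for X
      unfolding \<phi>_def by (rule someI_ex[OF ex[OF that]])
    have "inj_on \<phi> (T - {{}})"
    proof (rule inj_onI)
      fix X Y assume X: "X \<in> T - {{}}" "Y \<in> T - {{}}" "\<phi> X = \<phi> Y"
      have XT: "X \<in> T" "Y \<in> T" using X by auto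
      show "X = Y"
      proof (rule ccontr)
        assume ne: "X \<noteq> Y"
        have "X \<subseteq> Y \<or> Y \<subseteq> X" using chain[OF XT] .
        then show False
        proof
          assume "X \<subseteq> Y" then have "\<not> Y \<subseteq> X" using ne by blast
          then have "X \<subseteq> D Y" using cmp[OF XT(2) XT(1)] by blast
          then show False using \<phi>[OF X(1)] \<phi>[OF X(2)] X(3) by blast
        next
          assume "Y \<subseteq> X" then have "\<not> X \<subseteq> Y" using ne by blast
          then have "Y \<subseteq> D X" using cmp[OF XT(1) XT(2)] by blast
          then show False using \<phi>[OF X(1)] \<phi>[OF X(2)] X(3) by blast
        qed
      qed
    qed
    moreover have "\<phi> ` (T - {{}}) \<subseteq> B" using \<phi> by blast
    then have "countable (\<phi> ` (T - {{}}))" using countable_subset B(1) by blast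
    ultimately have "countable (T - {{}})" using countable_image_inj_on by blast
    then have "countable (insert {} (T - {{}}))" by simp
    moreover have "T \<subseteq> insert {} (T - {{}})" by blast
    ultimately show ?thesis using countable_subset by blast
  qed
  define h where "h = to_nat_on T"
  define S where "S = from_nat_into T"
  have hinj: "\<And>X Y. X \<in> T \<Longrightarrow> Y \<in> T \<Longrightarrow> h X = h Y \<longleftrightarrow> X = Y"
    using inj_on_to_nat_on[OF cT] unfolding h_def inj_on_def by blast
  have Sh: "\<And>X. X \<in> T \<Longrightarrow> S (h X) = X" unfolding S_def h_def using cT by simp
  define r where "r = {(h X, h Y) | X Y. X \<in> T \<and> Y \<in> T \<and> Y \<subseteq> X}"
  have rI: "(h A, h B) \<in> r \<longleftrightarrow> B \<subseteq> A" if "A \<in> T" "B \<in> T" for A B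
    unfolding r_def using that hinj by blast
  have rE: "\<exists>A B. a = h A \<and> b = h B \<and> A \<in> T \<and> B \<in> T" if "(a, b) \<in> r" for a b
    using that unfolding r_def by blast
  have Fr: "Field r = h ` T"
    unfolding r_def Field_def by blast
  have pred: "(b, h A) \<in> r \<longleftrightarrow> (\<exists>B\<in>T. b = h B \<and> A \<subseteq> B)" if A: "A \<in> T" for A b
  proof
    assume bA: "(b, h A) \<in> r"
    then obtain B A' where BA: "b = h B" "h A = h A'" "B \<in> T" "A' \<in> T" using rE by blast
    then have AA: "A' = A" using hinj[OF A BA(4)] by simp
    have "(h B, h A') \<in> r" using bA BA by simp
    then have "A' \<subseteq> B" using rI[OF BA(3) BA(4)] by simp
    then show "\<exists>B\<in>T. b = h B \<and> A \<subseteq> B" using AA BA(1,3) by blast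
  next
    assume "\<exists>B\<in>T. b = h B \<and> A \<subseteq> B"
    then obtain B where "B \<in> T" "b = h B" "A \<subseteq> B" by blast
    then show "(b, h A) \<in> r" using rI[OF \<open>B \<in> T\<close> A] by simp
  qed
  have lin: "Linear_order r"
    unfolding linear_order_on_def partial_order_on_def preorder_on_def
  proof (intro conjI)
    show "r \<subseteq> Field r \<times> Field r"
    proof (rule subrelI)
      fix x y assume "(x, y) \<in> r"
      then show "(x, y) \<in> Field r \<times> Field r" by (simp add: FieldI1 FieldI2)
    qed
    show "refl_on (Field r) r" unfolding refl_on_def Fr
    proof
      fix x assume "x \<in> h ` T"
      then obtain X where "X \<in> T" "x = h X" by blast
      then show "(x, x) \<in> r" using rI[of X X] by simp
    qed
    show "trans r" unfolding trans_def
    proof (intro allI impI)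
      fix a b c assume ab: "(a, b) \<in> r" and bc: "(b, c) \<in> r"
      obtain A B where AB: "a = h A" "b = h B" "A \<in> T" "B \<in> T" using rE[OF ab] by blast
      obtain B' C where BC: "b = h B'" "c = h C" "B' \<in> T" "C \<in> T" using rE[OF bc] by blast
      have "B' = B" using hinj[OF BC(3) AB(4)] AB(2) BC(1) by simp
      then have "B \<subseteq> A" "C \<subseteq> B" using rI[OF AB(3) AB(4)] rI[OF BC(3) BC(4)] ab bc AB BC by auto
      then have "C \<subseteq> A" by blast
      then show "(a, c) \<in> r" using rI[OF AB(3) BC(4)] AB(1) BC(2) by simp
    qed
    show "antisym r" unfolding antisym_def
    proof (intro allI impI)
      fix a b assume ab: "(a, b) \<in> r" and ba: "(b, a) \<in> r"
      obtain A B where AB: "a = h A" "b = h B" "A \<in> T" "B \<in> T" using rE[OF ab] by blast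
      then have "B \<subseteq> A" "A \<subseteq> B" using rI[OF AB(3) AB(4)] rI[OF AB(4) AB(3)] ab ba by auto
      then show "a = b" using AB by simp
    qed
    show "total_on (Field r) r" unfolding total_on_def Fr
    proof (intro ballI impI)
      fix a b assume "a \<in> h ` T" "b \<in> h ` T" "a \<noteq> b"
      then obtain A B where AB: "a = h A" "b = h B" "A \<in> T" "B \<in> T" by blast
      have "A \<subseteq> B \<or> B \<subseteq> A" using chain[OF AB(3) AB(4)] .
      then show "(a, b) \<in> r \<or> (b, a) \<in> r"
        using rI[OF AB(3) AB(4)] rI[OF AB(4) AB(3)] AB(1,2) by auto
    qed
  qed
  have wo: "Well_order r"
    unfolding Linear_order_Well_order_iff[OF lin]
  proof (intro allI impI)
    fix A assume A1: "A \<subseteq> Field r" and A2: "A \<noteq> {}"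
    note A = A1 A2
    define M where "M = {X\<in>T. h X \<in> A}"
    have "M \<subseteq> T" unfolding M_def by blast
    moreover have "M \<noteq> {}"
    proof -
      obtain x where "x \<in> A" using A by blast
      then obtain X where "X \<in> T" "x = h X" using A unfolding Fr by blast
      then show ?thesis unfolding M_def using \<open>x \<in> A\<close> by blast
    qed
    ultimately obtain G where G: "G \<in> M" "\<forall>Y\<in>M. Y \<subseteq> G" using greatest by blast
    have GT: "G \<in> T" "h G \<in> A" using G(1) unfolding M_def by auto
    show "\<exists>a\<in>A. \<forall>a'\<in>A. (a, a') \<in> r"
    proof -
      have "\<forall>a'\<in>A. (h G, a') \<in> r"
      proof
      fix a' assume a': "a' \<in> A"
      then obtain Y where Y: "a' = h Y" "Y \<in> T" using A unfolding Fr by blast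
      then have "Y \<in> M" unfolding M_def using a' by blast
      then have "Y \<subseteq> G" using G by blast
      then show "(h G, a') \<in> r" using rI[OF GT(1) Y(2)] Y(1) by simp
      qed
      then show ?thesis using GT(2) by blast
    qed
  qed
  have rs: "removed_seq f E r S"
    unfolding removed_seq_def
  proof (intro ballI conjI allI impI)
    fix a assume "a \<in> Field r"
    then obtain A where A: "a = h A" "A \<in> T" unfolding Fr by blast
    have SA: "S a = A" using Sh[OF A(2)] A(1) by simp
    {
      assume H: "\<forall>b. (b, a) \<in> r \<longrightarrow> b = a"
      have "A \<subseteq> E" using Tsub A(2) by blast
      then have "(h E, a) \<in> r" using rI[OF TE A(2)] A(1) by simp
      then have "h E = h A" using H A(1) by blast
      then have "E = A" using hinj[OF TE A(2)] by simp
      then show "S a = E" using SA by simp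
    }
    {
      fix b assume ip: "is_imm_pred r b a"
      then have ba: "(b, a) \<in> r" "b \<noteq> a" and ipc: "\<And>c. (c, a) \<in> r \<Longrightarrow> c \<noteq> a \<Longrightarrow> (c, b) \<in> r"
        unfolding is_imm_pred_def by blast+
      obtain B where B: "B \<in> T" "b = h B" "A \<subseteq> B" using ba(1) pred[OF A(2)] A(1) by blast
      have SB: "S b = B" using Sh[OF B(1)] B(2) by simp
      have AB: "A \<noteq> B" using ba(2) A(1) B(2) by blast
      have "\<not> B \<subseteq> A" using AB B(3) by blast
      then have ADB: "A \<subseteq> D B" using cmp[OF B(1) A(2)] by blast
      show "S a = discont_set f (S b)"
      proof (rule ccontr)
        assume "S a \<noteq> discont_set f (S b)"
        then have ne: "A \<noteq> D B" using SA SB unfolding D_def by simp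
        have DBT: "D B \<in> T" using TD[OF B(1)] .
        have "(h (D B), a) \<in> r" using rI[OF DBT A(2)] ADB A(1) by simp
        moreover have "h (D B) \<noteq> a" using hinj[OF DBT A(2)] ne A(1) by auto
        ultimately have "(h (D B), b) \<in> r" using ipc by blast
        then have "B \<subseteq> D B" using rI[OF DBT B(1)] B(2) by simp
        then have "D B = B" using dec[of B] by blast
        then have "B = {}" using fix_empty B(1) by blast
        then show False using AB B(3) by blast
      qed
    }
    {
      assume H: "(\<exists>b. (b, a) \<in> r \<and> b \<noteq> a) \<and> \<not> (\<exists>b. is_imm_pred r b a)"
      define Fam where "Fam = {S b | b. (b, a) \<in> r \<and> b \<noteq> a}"
      have Fam_eq: "Fam = {B\<in>T. A \<subseteq> B \<and> B \<noteq> A}"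
      proof
        show "Fam \<subseteq> {B\<in>T. A \<subseteq> B \<and> B \<noteq> A}"
        proof
          fix X assume "X \<in> Fam"
          then obtain b where b: "X = S b" "(b, a) \<in> r" "b \<noteq> a" unfolding Fam_def by blast
          then obtain B where B: "B \<in> T" "b = h B" "A \<subseteq> B" using pred[OF A(2)] A(1) by blast
          have XB: "X = B" using b(1) Sh[OF B(1)] B(2) by simp
          have "B \<noteq> A" using b(3) B(2) A(1) by blast
          then show "X \<in> {B\<in>T. A \<subseteq> B \<and> B \<noteq> A}" using XB B by blast
        qed
        show "{B\<in>T. A \<subseteq> B \<and> B \<noteq> A} \<subseteq> Fam"
        proof
          fix X assume X: "X \<in> {B\<in>T. A \<subseteq> B \<and> B \<noteq> A}"
          then have XT: "X \<in> T" "A \<subseteq> X" "X \<noteq> A" by auto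
          have "(h X, a) \<in> r" using rI[OF XT(1) A(2)] XT(2) A(1) by simp
          moreover have "h X \<noteq> a" using hinj[OF XT(1) A(2)] XT(3) A(1) by simp
          moreover have "X = S (h X)" using Sh[OF XT(1)] by simp
          ultimately show "X \<in> Fam" unfolding Fam_def by blast
        qed
      qed
      obtain b0 where b0: "(b0, a) \<in> r" "b0 \<noteq> a" using H by blast
      then obtain B0 where B0: "B0 \<in> T" "b0 = h B0" "A \<subseteq> B0" using pred[OF A(2)] A(1) by blast
      have "B0 \<noteq> A" using b0(2) B0(2) A(1) by blast
      then have B0F: "B0 \<in> Fam" unfolding Fam_eq using B0 by blast
      have "Fam \<subseteq> T" unfolding Fam_eq by blast
      then have IT: "\<Inter>Fam \<in> T" using TI[OF B0F] by blast
      have AI: "A \<subseteq> \<Inter>Fam" unfolding Fam_eq by blast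
      have "A = \<Inter>Fam"
      proof (rule ccontr)
        assume ne: "A \<noteq> \<Inter>Fam"
        have nip: "\<not> is_imm_pred r (h (\<Inter>Fam)) a" using H by blast
        have p1: "(h (\<Inter>Fam), a) \<in> r" using rI[OF IT A(2)] AI A(1) by simp
        have p2: "h (\<Inter>Fam) \<noteq> a" using hinj[OF IT A(2)] ne A(1) by auto
        obtain c where c: "(c, a) \<in> r" "c \<noteq> a" "(c, h (\<Inter>Fam)) \<notin> r"
          using nip p1 p2 unfolding is_imm_pred_def by blast
        then obtain C where C: "C \<in> T" "c = h C" "A \<subseteq> C" using pred[OF A(2)] A(1) by blast
        have "C \<noteq> A" using c(2) C(2) A(1) by blast
        then have "C \<in> Fam" unfolding Fam_eq using C by blast
        then have "\<Inter>Fam \<subseteq> C" by blast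
        then have "(c, h (\<Inter>Fam)) \<in> r" using rI[OF C(1) IT] C(2) by simp
        then show False using c(3) by blast
      qed
      then show "S a = \<Inter>{S b | b. (b, a) \<in> r \<and> b \<noteq> a}" using SA unfolding Fam_def by simp
    }
  qed
  show ?thesis
  proof (intro exI conjI)
    show "Well_order r" by (rule wo)
    show "h {} \<in> Field r" unfolding Fr using Te by blast
    show "removed_seq f E r S" by (rule rs)
    show "S (h {}) = {}" using Sh Te by blast
  qed
qed

end
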